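(* Let $\mathbf{k}$ be a field. Every connected graded left counital $\mathbf{k}$-bialgebra $(H,m,\mu,\Delta,\varepsilon)$ is a left counital Hopf algebra, i.e. it admits a right antipode $S$ with $\mathrm{id}_H\ast S=\mu\varepsilon$. Such an $S$ is given by the recursion $S(1_H)=1_H$ and, for homogeneous $x\in H^{(n)}$, $n\ge1$, $S(x)=-\sum_{(x)}x'S(x'')$, where $\tilde\Delta(x)=\Delta(x)-1\otimes x=\sum_{(x)}x'\otimes x''$ (Sweedler notation), extended linearly.
   Context: All algebras are unital commutative over $\mathbf{k}$. A left counital bialgebra $(H,m,\mu,\Delta,\varepsilon)$ is an algebra $H$ with unit map $\mu$ and algebra homomorphisms $\Delta:H\to H\otimes H$ (coassociative) and $\varepsilon:H\to\mathbf{k}$ with $(\varepsilon\otimes\mathrm{id})\Delta=\beta_\ell$, $\beta_\ell(u)=1\otimes u$ (right counicity not required). It is graded if $H=\bigoplus_{n\ge0}H^{(n)}$ for submodules with $H^{(p)}H^{(q)}\subseteq H^{(p+q)}$ and $\Delta(H^{(n)})\subseteq (H^{(0)}\otimes H^{(n)})\oplus\bigoplus_{p+q=n,\,p,q>0}H^{(p)}\otimes H^{(q)}$ for all $n$; connected if moreover $H^{(0)}=\mathrm{im}\,\mu=\mathbf{k}1_H$ and $\ker\varepsilon=\bigoplus_{n\ge1}H^{(n)}$. The convolution of $f,g\in\mathrm{End}_{\mathbf{k}}(H)$ is $f\ast g=m(f\otimes g)\Delta$. A right antipode is a linear $S:H\to H$ with $\mathrm{id}_H\ast S=\mu\varepsilon$;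 a left counital bialgebra with a right antipode is called a left counital (right antipode) Hopf algebra. *)

theory Defs
  imports Complex_Main
begin

(* Tensor powers H^{\<otimes>n} are modelled literally: the free k-vector space on words
   (lists) of elements of H, modulo the subspace generated by the multilinearity
   relations in every position.  A formal sum of words is given by a list of words. *)

definition tdelta :: "'h list \<Rightarrow> 'h list \<Rightarrow> 'k::field" where
  "tdelta w = (\<lambda>v. if v = w then 1 else 0)"

inductive_set tnull :: "('k::field \<Rightarrow> 'h::ab_group_add \<Rightarrow> 'h) \<Rightarrow> ('h list \<Rightarrow> 'k) set"
  for sc :: "'k::field \<Rightarrow> 'h::ab_group_add \<Rightarrow> 'h" where
  tnull_zero: "(\<lambda>v. 0) \<in> tnull sc"
| tnull_add: "f \<in> tnull sc \<Longrightarrow> g \<in> tnull sc \<Longrightarrow> (\<lambda>v. f v + g v) \<in> tnull sc"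
| tnull_smult: "f \<in> tnull sc \<Longrightarrow> (\<lambda>v. c * f v) \<in> tnull sc"
| tnull_additive: "(\<lambda>v. tdelta (u @ (a + b) # w) v - tdelta (u @ a # w) v - tdelta (u @ b # w) v)
      \<in> tnull sc"
| tnull_homog: "(\<lambda>v. tdelta (u @ sc c a # w) v - c * tdelta (u @ a # w) v) \<in> tnull sc"

definition formal_sum :: "'h list list \<Rightarrow> 'h list \<Rightarrow> 'k::field" where
  "formal_sum ws = (\<lambda>v. sum_list (map (\<lambda>w. tdelta w v) ws))"

definition tensor_eq :: "('k::field \<Rightarrow> 'h::ab_group_add \<Rightarrow> 'h) \<Rightarrow> 'h list list \<Rightarrow> 'h list list \<Rightarrow> bool" where
  "tensor_eq sc ws ws' \<longleftrightarrow> (\<lambda>v. formal_sum ws v - (formal_sum ws' v :: 'k)) \<in> tnull sc"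

text \<open>A list of pairs (a,b) represents the element sum of a \<otimes> b of H \<otimes> H.\<close>
definition pairs2 :: "('h \<times> 'h) list \<Rightarrow> 'h list list" where
  "pairs2 xs = map (\<lambda>(a, b). [a, b]) xs"

text \<open>H is a commutative k-algebra: ring structure of type 'h, scalar action sc,
  unit map c \<mapsto> sc c 1.  The coproduct is given by a representative list of pairs.\<close>
definition left_counital_bialgebra ::
  "('k::field \<Rightarrow> 'h::comm_ring_1 \<Rightarrow> 'h) \<Rightarrow> ('h \<Rightarrow> ('h \<times> 'h) list) \<Rightarrow> ('h \<Rightarrow> 'k) \<Rightarrow> bool" where
  "left_counital_bialgebra sc \<Delta> \<epsilon> \<longleftrightarrow>
     Vector_Spaces.vector_space sc
   \<and> (\<forall>c x y. sc c (x * y) = sc c x * y) \<and> (\<forall>c x y. sc c (x * y) = x * sc c y)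
   \<and> (\<forall>x y. \<epsilon> (x + y) = \<epsilon> x + \<epsilon> y) \<and> (\<forall>c x. \<epsilon> (sc c x) = c * \<epsilon> x)
   \<and> (\<forall>x y. \<epsilon> (x * y) = \<epsilon> x * \<epsilon> y) \<and> \<epsilon> 1 = 1
   \<and> (\<forall>x y. tensor_eq sc (pairs2 (\<Delta> (x + y))) (pairs2 (\<Delta> x @ \<Delta> y)))
   \<and> (\<forall>c x. tensor_eq sc (pairs2 (\<Delta> (sc c x))) (pairs2 (map (\<lambda>(a, b). (sc c a, b)) (\<Delta> x))))
   \<and> (\<forall>x y. tensor_eq sc (pairs2 (\<Delta> (x * y)))
                       (pairs2 [(a * a', b * b'). (a, b) \<leftarrow> \<Delta> x, (a', b') \<leftarrow> \<Delta> y]))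
   \<and> tensor_eq sc (pairs2 (\<Delta> 1)) (pairs2 [(1, 1)])
   \<and> (\<forall>x. tensor_eq sc [[a1, a2, b]. (a, b) \<leftarrow> \<Delta> x, (a1, a2) \<leftarrow> \<Delta> a]
                       [[a, b1, b2]. (a, b) \<leftarrow> \<Delta> x, (b1, b2) \<leftarrow> \<Delta> b])
   \<and> (\<forall>x. sum_list (map (\<lambda>(a, b). sc (\<epsilon> a) b) (\<Delta> x)) = x)"

definition graded_bialgebra ::
  "('k::field \<Rightarrow> 'h::comm_ring_1 \<Rightarrow> 'h) \<Rightarrow> ('h \<Rightarrow> ('h \<times> 'h) list) \<Rightarrow> (nat \<Rightarrow> 'h set) \<Rightarrow> bool" where
  "graded_bialgebra sc \<Delta> Hn \<longleftrightarrow>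
     (\<forall>n. Modules.module.subspace sc (Hn n))
   \<and> (\<forall>x. \<exists>!f :: nat \<Rightarrow> 'h. (\<forall>n. f n \<in> Hn n) \<and> (\<exists>N. (\<forall>n\<ge>N. f n = 0) \<and> x = sum f {..<N}))
   \<and> (\<forall>p q x y. x \<in> Hn p \<longrightarrow> y \<in> Hn q \<longrightarrow> x * y \<in> Hn (p + q))
   \<and> (\<forall>n x. x \<in> Hn n \<longrightarrow>
        (\<exists>ys. tensor_eq sc (pairs2 (\<Delta> x)) (pairs2 ys)
             \<and> (\<forall>(a, b) \<in> set ys. (a \<in> Hn 0 \<and> b \<in> Hn n)
                   \<or> (\<exists>p q. 0 < p \<and> 0 < q \<and> p + q = n \<and> a \<in> Hn p \<and> b \<in> Hn q))))"

definition connected_graded_bialgebra ::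
  "('k::field \<Rightarrow> 'h::comm_ring_1 \<Rightarrow> 'h) \<Rightarrow> ('h \<Rightarrow> ('h \<times> 'h) list) \<Rightarrow> ('h \<Rightarrow> 'k) \<Rightarrow> (nat \<Rightarrow> 'h set) \<Rightarrow> bool" where
  "connected_graded_bialgebra sc \<Delta> \<epsilon> Hn \<longleftrightarrow>
     graded_bialgebra sc \<Delta> Hn
   \<and> Hn 0 = range (\<lambda>c. sc c 1)
   \<and> {x. \<epsilon> x = 0} = {x. \<exists>N f. (\<forall>n. f n \<in> Hn (Suc n)) \<and> x = sum f {..<N}}"

text \<open>Convolution f * g = m (f \<otimes> g) \<Delta>, computed on the representative of \<Delta> x
  (well defined for linear f, g).\<close>
definition convolution :: "('h \<Rightarrow> ('h \<times> 'h) list) \<Rightarrow> ('h \<Rightarrow> 'h::comm_ring_1) \<Rightarrow> ('h \<Rightarrow> 'h) \<Rightarrow> 'h \<Rightarrow> 'h" where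
  "convolution \<Delta> f g x = sum_list (map (\<lambda>(a, b). f a * g b) (\<Delta> x))"

end

theory Submission
  imports Defs
begin

locale cgb =
  fixes sc :: "'k::field \<Rightarrow> 'h::comm_ring_1 \<Rightarrow> 'h"
    and \<Delta> :: "'h \<Rightarrow> ('h \<times> 'h) list"
    and \<epsilon> :: "'h \<Rightarrow> 'k"
    and Hn :: "nat \<Rightarrow> 'h set"
  assumes lcb: "left_counital_bialgebra sc \<Delta> \<epsilon>"
    and cgr: "connected_graded_bialgebra sc \<Delta> \<epsilon> Hn"
begin

sublocale V: vector_space sc
  using lcb unfolding left_counital_bialgebra_def by auto

lemma sc_mult_l: "sc c (x * y) = sc c x * y"
  and sc_mult_r: "sc c (x * y) = x * sc c y"
  and eps_add: "\<epsilon> (x + y) = \<epsilon> x + \<epsilon> y"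
  and eps_sc: "\<epsilon> (sc c x) = c * \<epsilon> x"
  and eps_one: "\<epsilon> 1 = 1"
  and Delta_add: "tensor_eq sc (pairs2 (\<Delta> (x + y))) (pairs2 (\<Delta> x @ \<Delta> y))"
  and Delta_sc: "tensor_eq sc (pairs2 (\<Delta> (sc c x))) (pairs2 (map (\<lambda>(a, b). (sc c a, b)) (\<Delta> x)))"
  and Delta_one: "tensor_eq sc (pairs2 (\<Delta> 1)) (pairs2 [(1, 1)])"
  and counit: "sum_list (map (\<lambda>(a, b). sc (\<epsilon> a) b) (\<Delta> x)) = x"
  using lcb unfolding left_counital_bialgebra_def by auto

lemma subsp: "V.subspace (Hn n)"
  and decomp: "\<exists>!f :: nat \<Rightarrow> 'h. (\<forall>n. f n \<in> Hn n) \<and> (\<exists>N. (\<forall>n\<ge>N. f n = 0) \<and> x = sum f {..<N})"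
  and Delta_gr: "x \<in> Hn n \<Longrightarrow>
        (\<exists>ys. tensor_eq sc (pairs2 (\<Delta> x)) (pairs2 ys)
             \<and> (\<forall>(a, b) \<in> set ys. (a \<in> Hn 0 \<and> b \<in> Hn n)
                   \<or> (\<exists>p q. 0 < p \<and> 0 < q \<and> p + q = n \<and> a \<in> Hn p \<and> b \<in> Hn q)))"
  and Hn0: "Hn 0 = range (\<lambda>c. sc c 1)"
  and ker: "{x. \<epsilon> x = 0} = {x. \<exists>N f. (\<forall>n. f n \<in> Hn (Suc n)) \<and> x = sum f {..<N}}"
  using cgr unfolding connected_graded_bialgebra_def graded_bialgebra_def by auto

definition bilin :: "('h \<Rightarrow> 'h \<Rightarrow> 'h) \<Rightarrow> bool" where
  "bilin B \<longleftrightarrow> (\<forall>a a' b. B (a + a') b = B a b + B a' b) \<and> (\<forall>c a b. B (sc c a) b = sc c (B a b))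
     \<and> (\<forall>a b b'. B a (b + b') = B a b + B a b') \<and> (\<forall>c a b. B a (sc c b) = sc c (B a b))"

definition Phi :: "('h \<Rightarrow> 'h \<Rightarrow> 'h) \<Rightarrow> 'h list \<Rightarrow> 'h" where
  "Phi B v = (if length v = 2 then B (v ! 0) (v ! 1) else 0)"

lemma Phi_add:
  assumes "bilin B"
  shows "Phi B (u @ (a + b) # w) = Phi B (u @ a # w) + Phi B (u @ b # w)"
proof (cases "length u + length w = 1")
  case True
  then consider "u = []" "length w = 1" | "length u = 1" "w = []"
    using add_is_1 by fastforce
  then show ?thesis using assms by cases (auto simp: Phi_def bilin_def nth_append length_Suc_conv)
next
  case False then show ?thesis by (simp add: Phi_def)
qed

lemma Phi_sc:
  assumes "bilin B"
  shows "Phi B (u @ sc c a # w) = sc c (Phi B (u @ a # w))"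
proof (cases "length u + length w = 1")
  case True
  then consider "u = []" "length w = 1" | "length u = 1" "w = []"
    using add_is_1 by fastforce
  then show ?thesis using assms by cases (auto simp: Phi_def bilin_def nth_append length_Suc_conv)
next
  case False then show ?thesis by (simp add: Phi_def)
qed

definition Ev :: "('h \<Rightarrow> 'h \<Rightarrow> 'h) \<Rightarrow> ('h list \<Rightarrow> 'k) \<Rightarrow> 'h" where
  "Ev B g = (\<Sum>v\<in>{v. g v \<noteq> 0}. sc (g v) (Phi B v))"

lemma EvA: "finite A \<Longrightarrow> {v. g v \<noteq> 0} \<subseteq> A \<Longrightarrow> Ev B g = (\<Sum>v\<in>A. sc (g v) (Phi B v))"
  unfolding Ev_def by (rule sum.mono_neutral_left) (auto intro: finite_subset)

lemma sum_delta: "finite A \<Longrightarrow> w \<in> A \<Longrightarrow> (\<Sum>v\<in>A. sc (tdelta w v) (Phi B v)) = Phi B w"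
proof -
  assume "finite A" "w \<in> A"
  have "\<And>v. sc (tdelta w v) (Phi B v) = (if v = w then Phi B v else 0)"
    by (simp add: tdelta_def)
  then show ?thesis using \<open>finite A\<close> \<open>w \<in> A\<close> by (simp add: sum.delta')
qed

lemma tnull_ev: "g \<in> tnull sc \<Longrightarrow> bilin B \<Longrightarrow> finite {v. g v \<noteq> 0} \<and> Ev B g = 0"
proof (induction rule: tnull.induct)
  case tnull_zero
  then show ?case by (simp add: Ev_def)
next
  case (tnull_add f g)
  let ?A = "{v. f v \<noteq> 0} \<union> {v. g v \<noteq> 0}"
  have fin: "finite ?A" using tnull_add by auto
  have sub: "{v. f v + g v \<noteq> 0} \<subseteq> ?A" by auto
  have "Ev B (\<lambda>v. f v + g v) = (\<Sum>v\<in>?A. sc (f v + g v) (Phi B v))"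
    by (rule EvA[OF fin sub])
  also have "\<dots> = (\<Sum>v\<in>?A. sc (f v) (Phi B v)) + (\<Sum>v\<in>?A. sc (g v) (Phi B v))"
    by (simp add: V.scale_left_distrib sum.distrib)
  also have "\<dots> = Ev B f + Ev B g"
    using EvA[OF fin, of f B] EvA[OF fin, of g B] by auto
  finally show ?case using tnull_add fin finite_subset[OF sub] by auto
next
  case (tnull_smult f c)
  let ?A = "{v. f v \<noteq> 0}"
  have fin: "finite ?A" using tnull_smult by auto
  have sub: "{v. c * f v \<noteq> 0} \<subseteq> ?A" by auto
  have "Ev B (\<lambda>v. c * f v) = (\<Sum>v\<in>?A. sc (c * f v) (Phi B v))"
    by (rule EvA[OF fin sub])
  also have "\<dots> = sc c (Ev B f)"
    by (simp add: Ev_def V.scale_sum_right)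
  finally show ?case using tnull_smult fin finite_subset[OF sub] by auto
next
  case (tnull_additive u a b w)
  let ?A = "{u @ (a + b) # w, u @ a # w, u @ b # w}"
  have fin: "finite ?A" by simp
  have sub: "{v. tdelta (u @ (a + b) # w) v - tdelta (u @ a # w) v - tdelta (u @ b # w) v \<noteq> (0::'k)} \<subseteq> ?A"
    by (auto simp: tdelta_def)
  have "Ev B (\<lambda>v. tdelta (u @ (a + b) # w) v - tdelta (u @ a # w) v - tdelta (u @ b # w) v)
     = (\<Sum>v\<in>?A. sc (tdelta (u @ (a + b) # w) v - tdelta (u @ a # w) v - tdelta (u @ b # w) v) (Phi B v))"
    by (rule EvA[OF fin sub])
  also have "\<dots> = (\<Sum>v\<in>?A. sc (tdelta (u @ (a + b) # w) v) (Phi B v))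
       - (\<Sum>v\<in>?A. sc (tdelta (u @ a # w) v) (Phi B v)) - (\<Sum>v\<in>?A. sc (tdelta (u @ b # w) v) (Phi B v))"
    by (simp add: V.scale_left_diff_distrib sum_subtractf)
  also have "\<dots> = Phi B (u @ (a + b) # w) - Phi B (u @ a # w) - Phi B (u @ b # w)"
    using sum_delta[OF fin, of "u @ (a + b) # w" B] sum_delta[OF fin, of "u @ a # w" B]
      sum_delta[OF fin, of "u @ b # w" B] by simp
  also have "\<dots> = 0" using Phi_add[OF tnull_additive] by simp
  finally show ?case using finite_subset[OF sub fin] by simp
next
  case (tnull_homog u c a w)
  let ?A = "{u @ sc c a # w, u @ a # w}"
  have fin: "finite ?A" by simp
  have sub: "{v. tdelta (u @ sc c a # w) v - c * tdelta (u @ a # w) v \<noteq> (0::'k)} \<subseteq> ?A"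
    by (auto simp: tdelta_def)
  have "Ev B (\<lambda>v. tdelta (u @ sc c a # w) v - c * tdelta (u @ a # w) v)
     = (\<Sum>v\<in>?A. sc (tdelta (u @ sc c a # w) v - c * tdelta (u @ a # w) v) (Phi B v))"
    by (rule EvA[OF fin sub])
  also have "\<dots> = (\<Sum>v\<in>?A. sc (tdelta (u @ sc c a # w) v) (Phi B v))
       - sc c (\<Sum>v\<in>?A. sc (tdelta (u @ a # w) v) (Phi B v))"
    by (simp add: V.scale_left_diff_distrib sum_subtractf V.scale_sum_right)
  also have "\<dots> = Phi B (u @ sc c a # w) - sc c (Phi B (u @ a # w))"
    using sum_delta[OF fin, of "u @ sc c a # w" B] sum_delta[OF fin, of "u @ a # w" B] by simp
  also have "\<dots> = 0" using Phi_sc[OF tnull_homog] by simp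
  finally show ?case using finite_subset[OF sub fin] by simp
qed

lemma fs_zero: "v \<notin> set ws \<Longrightarrow> formal_sum ws v = (0::'k)"
  by (induct ws) (auto simp: formal_sum_def tdelta_def)

lemma fs_sum: "finite A \<Longrightarrow> set ws \<subseteq> A \<Longrightarrow>
   (\<Sum>v\<in>A. sc (formal_sum ws v) (Phi B v)) = sum_list (map (Phi B) ws)"
proof (induct ws)
  case Nil
  then show ?case by (simp add: formal_sum_def)
next
  case (Cons w ws)
  have "\<And>v. formal_sum (w # ws) v = tdelta w v + (formal_sum ws v :: 'k)"
    by (simp add: formal_sum_def)
  then have "(\<Sum>v\<in>A. sc (formal_sum (w # ws) v) (Phi B v))
     = (\<Sum>v\<in>A. sc (tdelta w v) (Phi B v)) + (\<Sum>v\<in>A. sc (formal_sum ws v) (Phi B v))"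
    by (simp add: V.scale_left_distrib sum.distrib)
  then show ?case using Cons sum_delta[of A w B] by simp
qed

lemma W: assumes "tensor_eq sc ws ws'" "bilin B"
  shows "sum_list (map (Phi B) ws) = sum_list (map (Phi B) ws')"
proof -
  let ?g = "\<lambda>v. formal_sum ws v - (formal_sum ws' v :: 'k)"
  have "?g \<in> tnull sc" using assms(1) unfolding tensor_eq_def .
  from tnull_ev[OF this assms(2)] have z: "Ev B ?g = 0" by simp
  let ?A = "set ws \<union> set ws'"
  have sub: "{v. ?g v \<noteq> 0} \<subseteq> ?A"
  proof (rule subsetI, rule ccontr)
    fix v assume "v \<in> {v. ?g v \<noteq> 0}" "v \<notin> ?A"
    then show False using fs_zero[of v ws] fs_zero[of v ws'] by auto
  qed
  have "Ev B ?g = (\<Sum>v\<in>?A. sc (?g v) (Phi B v))" by (rule EvA[OF _ sub]) simp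
  also have "\<dots> = (\<Sum>v\<in>?A. sc (formal_sum ws v) (Phi B v)) - (\<Sum>v\<in>?A. sc (formal_sum ws' v) (Phi B v))"
    by (simp add: V.scale_left_diff_distrib sum_subtractf)
  also have "\<dots> = sum_list (map (Phi B) ws) - sum_list (map (Phi B) ws')"
    by (subst fs_sum, simp, simp)+ simp
  finally show ?thesis using z by simp
qed


definition Bsum :: "('h \<Rightarrow> 'h \<Rightarrow> 'h) \<Rightarrow> ('h \<times> 'h) list \<Rightarrow> 'h" where
  "Bsum B xs = sum_list (map (\<lambda>(a, b). B a b) xs)"

lemma Bsum_simps[simp]: "Bsum B [] = 0" "Bsum B ((a, b) # xs) = B a b + Bsum B xs"
  "Bsum B (xs @ ys) = Bsum B xs + Bsum B ys"
  by (simp_all add: Bsum_def)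

lemma Phi_pairs2: "sum_list (map (Phi B) (pairs2 xs)) = Bsum B xs"
  by (induct xs) (auto simp: pairs2_def Phi_def Bsum_def)

lemma W2: "tensor_eq sc (pairs2 xs) (pairs2 ys) \<Longrightarrow> bilin B \<Longrightarrow> Bsum B xs = Bsum B ys"
  using W[of "pairs2 xs" "pairs2 ys" B] by (simp add: Phi_pairs2)

lemma bilin_zero: "bilin B \<Longrightarrow> B a 0 = 0"
proof -
  assume "bilin B"
  then have "B a (sc 0 0) = sc 0 (B a 0)" unfolding bilin_def by blast
  then show ?thesis by simp
qed

lemma Bsum_map_sc: "bilin B \<Longrightarrow> Bsum B (map (\<lambda>(a, b). (sc c a, b)) xs) = sc c (Bsum B xs)"
  by (induct xs) (auto simp: bilin_def V.scale_right_distrib)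

lemma Bsum_cong: "(\<And>a b. (a, b) \<in> set xs \<Longrightarrow> B a b = B' a b) \<Longrightarrow> Bsum B xs = Bsum B' xs"
  by (induct xs) auto

lemma Bsum_zero: "Bsum (\<lambda>a b. 0) xs = 0"
  by (induct xs) auto

lemma Bsum_filter: "Bsum B xs = Bsum B (filter P xs) + Bsum B (filter (Not \<circ> P) xs)"
  by (induct xs) (auto simp: algebra_simps)

lemma Delta_Bsum_add: "bilin B \<Longrightarrow> Bsum B (\<Delta> (x + y)) = Bsum B (\<Delta> x) + Bsum B (\<Delta> y)"
  using W2[OF Delta_add] by simp

lemma Delta_Bsum_sc: "bilin B \<Longrightarrow> Bsum B (\<Delta> (sc c x)) = sc c (Bsum B (\<Delta> x))"
  using W2[OF Delta_sc] Bsum_map_sc by simp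

lemma Delta_Bsum_one: "bilin B \<Longrightarrow> Bsum B (\<Delta> 1) = B 1 1"
  using W2[OF Delta_one] by simp

definition lin :: "('h \<Rightarrow> 'h) \<Rightarrow> bool" where
  "lin f \<longleftrightarrow> (\<forall>x y. f (x + y) = f x + f y) \<and> (\<forall>c x. f (sc c x) = sc c (f x))"

lemma bilin_mult: "lin f \<Longrightarrow> bilin (\<lambda>a b. a * f b)"
  by (auto simp: lin_def bilin_def algebra_simps sc_mult_l[symmetric] sc_mult_r[symmetric])

lemma bilin_counit: "bilin (\<lambda>a b. sc (\<epsilon> a) b)"
  by (auto simp: bilin_def eps_add eps_sc V.scale_left_distrib V.scale_right_distrib mult.commute)

lemma bilin_1_Bsum: "bilin B \<Longrightarrow> Bsum (\<lambda>a b. sc (\<epsilon> a) (B 1 b)) xs = B 1 (Bsum (\<lambda>a b. sc (\<epsilon> a) b) xs)"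
  by (induct xs) (auto simp: bilin_def bilin_zero)

definition comp :: "'h \<Rightarrow> nat \<Rightarrow> 'h" where
  "comp x = (THE f. (\<forall>n. f n \<in> Hn n) \<and> (\<exists>N. (\<forall>n\<ge>N. f n = 0) \<and> x = sum f {..<N}))"

lemma comp_prop: "(\<forall>n. comp x n \<in> Hn n) \<and> (\<exists>N. (\<forall>n\<ge>N. comp x n = 0) \<and> x = sum (comp x) {..<N})"
  unfolding comp_def by (rule theI'[OF decomp])

lemma comp_in: "comp x n \<in> Hn n"
  using comp_prop by blast

lemma comp_unique: "(\<forall>n. f n \<in> Hn n) \<Longrightarrow> (\<forall>n\<ge>N. f n = 0) \<Longrightarrow> x = sum f {..<N} \<Longrightarrow> comp x = f"
  unfolding comp_def by (rule the1_equality[OF decomp]) auto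

lemma sum_ext: "\<forall>n\<ge>(N1::nat). f n = 0 \<Longrightarrow> N1 \<le> N \<Longrightarrow> sum f {..<N} = sum f {..<N1}"
proof (rule sum.mono_neutral_right)
  assume a: "\<forall>n\<ge>N1. f n = 0" "N1 \<le> N"
  show "finite {..<N}" by simp
  show "{..<N1} \<subseteq> {..<N}" using a by auto
  show "\<forall>i\<in>{..<N} - {..<N1}. f i = 0" using a by auto
qed

lemma zero_Hn: "0 \<in> Hn n"
  using V.subspace_0[OF subsp] .

lemma comp_add: "comp (x + y) n = comp x n + comp y n"
proof -
  obtain N1 where N1: "\<forall>n\<ge>N1. comp x n = 0" "x = sum (comp x) {..<N1}" using comp_prop by blast
  obtain N2 where N2: "\<forall>n\<ge>N2. comp y n = 0" "y = sum (comp y) {..<N2}" using comp_prop by blast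
  let ?N = "max N1 N2"
  have "comp (x + y) = (\<lambda>n. comp x n + comp y n)"
  proof (rule comp_unique[of _ ?N])
    show "\<forall>n. comp x n + comp y n \<in> Hn n"
      using V.subspace_add[OF subsp] comp_in by blast
    show "\<forall>n\<ge>?N. comp x n + comp y n = 0" using N1 N2 by auto
    have "x = sum (comp x) {..<?N}" using N1 sum_ext[of N1 "comp x" ?N] by auto
    moreover have "y = sum (comp y) {..<?N}" using N2 sum_ext[of N2 "comp y" ?N] by auto
    ultimately show "x + y = (\<Sum>n<?N. comp x n + comp y n)" by (simp add: sum.distrib)
  qed
  then show ?thesis by simp
qed

lemma comp_sc: "comp (sc c x) n = sc c (comp x n)"
proof -
  obtain N1 where N1: "\<forall>n\<ge>N1. comp x n = 0" "x = sum (comp x) {..<N1}" using comp_prop by blast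
  have "comp (sc c x) = (\<lambda>n. sc c (comp x n))"
  proof (rule comp_unique[of _ N1])
    show "\<forall>n. sc c (comp x n) \<in> Hn n"
      using V.subspace_scale[OF subsp] comp_in by blast
    show "\<forall>n\<ge>N1. sc c (comp x n) = 0" using N1 by auto
    show "sc c x = (\<Sum>n<N1. sc c (comp x n))" using N1 by (metis V.scale_sum_right)
  qed
  then show ?thesis by simp
qed

lemma comp_hom: "y \<in> Hn j \<Longrightarrow> comp y = (\<lambda>n. if n = j then y else 0)"
  by (rule comp_unique[of _ "Suc j"]) (auto simp: zero_Hn)

lemma eps_pos: "a \<in> Hn p \<Longrightarrow> 0 < p \<Longrightarrow> \<epsilon> a = 0"
proof -
  assume a: "a \<in> Hn p" "0 < p"
  let ?f = "\<lambda>n. if n = p - 1 then a else 0"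
  have "\<forall>n. ?f n \<in> Hn (Suc n)" using a zero_Hn by auto
  moreover have "a = sum ?f {..<p}" using a by simp
  ultimately have "a \<in> {x. \<exists>N f. (\<forall>n. f n \<in> Hn (Suc n)) \<and> x = sum f {..<N}}"
    by (intro CollectI exI[of _ p] exI[of _ ?f]) simp
  then show ?thesis using ker by blast
qed

lemma Hn0_eps: "a \<in> Hn 0 \<Longrightarrow> a = sc (\<epsilon> a) 1"
  using Hn0 by (auto simp: eps_sc eps_one)

lemma one_Hn0: "1 \<in> Hn 0"
  using Hn0 by (metis V.scale_one rangeI)

lemma eps_zero: "\<epsilon> 0 = 0"
  using eps_sc[of 0 0] by simp

lemma eps_sum: "\<epsilon> (sum f A) = (\<Sum>a\<in>A. \<epsilon> (f a))"
  by (induct A rule: infinite_finite_induct) (auto simp: eps_zero eps_add)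

lemma YS_ex: assumes y: "y \<in> Hn j" and j: "0 < j"
  shows "\<exists>ys. (\<forall>B. bilin B \<longrightarrow> Bsum B (\<Delta> y) = B 1 y + Bsum B ys) \<and> (\<forall>(a, b)\<in>set ys. \<exists>q<j. b \<in> Hn q)"
proof -
  obtain ys0 where t: "tensor_eq sc (pairs2 (\<Delta> y)) (pairs2 ys0)"
    and ty: "\<forall>(a, b) \<in> set ys0. (a \<in> Hn 0 \<and> b \<in> Hn j)
                   \<or> (\<exists>p q. 0 < p \<and> 0 < q \<and> p + q = j \<and> a \<in> Hn p \<and> b \<in> Hn q)"
    using Delta_gr[OF y] by blast
  define P where "P = (\<lambda>(a::'h, b::'h). a \<in> Hn 0 \<and> b \<in> Hn j)"
  define ys where "ys = filter (Not \<circ> P) ys0"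
  have deg: "\<forall>(a, b)\<in>set ys. \<exists>q<j. b \<in> Hn q"
  proof (clarify)
    fix a b assume "(a, b) \<in> set ys"
    then have "(a, b) \<in> set ys0" "\<not> P (a, b)" by (auto simp: ys_def)
    then obtain p q where "0 < p" "p + q = j" "b \<in> Hn q" using ty P_def by fastforce
    then show "\<exists>q<j. b \<in> Hn q" by (intro exI[of _ q]) auto
  qed
  have epsB: "\<And>a b. (a, b) \<in> set ys \<Longrightarrow> \<epsilon> a = 0"
  proof -
    fix a b assume "(a, b) \<in> set ys"
    then have "(a, b) \<in> set ys0" "\<not> P (a, b)" by (auto simp: ys_def)
    then obtain p where "0 < p" "a \<in> Hn p" using ty P_def by fastforce
    then show "\<epsilon> a = 0" using eps_pos by blast
  qed
  have cu: "Bsum (\<lambda>a b. sc (\<epsilon> a) b) (filter P ys0) = y"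
  proof -
    have "y = Bsum (\<lambda>a b. sc (\<epsilon> a) b) (\<Delta> y)" using counit[of y] by (simp add: Bsum_def)
    also have "\<dots> = Bsum (\<lambda>a b. sc (\<epsilon> a) b) ys0" by (rule W2[OF t bilin_counit])
    also have "\<dots> = Bsum (\<lambda>a b. sc (\<epsilon> a) b) (filter P ys0) + Bsum (\<lambda>a b. sc (\<epsilon> a) b) ys"
      unfolding ys_def by (rule Bsum_filter)
    also have "Bsum (\<lambda>a b. sc (\<epsilon> a) b) ys = Bsum (\<lambda>a b. 0) ys"
      by (rule Bsum_cong) (simp add: epsB)
    finally show ?thesis by (simp add: Bsum_zero)
  qed
  have "\<forall>B. bilin B \<longrightarrow> Bsum B (\<Delta> y) = B 1 y + Bsum B ys"
  proof (intro allI impI)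
    fix B assume B: "bilin B"
    have "Bsum B (\<Delta> y) = Bsum B ys0" by (rule W2[OF t B])
    also have "\<dots> = Bsum B (filter P ys0) + Bsum B ys" unfolding ys_def by (rule Bsum_filter)
    also have "Bsum B (filter P ys0) = Bsum (\<lambda>a b. sc (\<epsilon> a) (B 1 b)) (filter P ys0)"
    proof (rule Bsum_cong)
      fix a b assume "(a, b) \<in> set (filter P ys0)"
      then have "a = sc (\<epsilon> a) 1" using Hn0_eps P_def by auto
      then have "B a b = B (sc (\<epsilon> a) 1) b" by simp
      then show "B a b = sc (\<epsilon> a) (B 1 b)" using B by (simp add: bilin_def)
    qed
    also have "\<dots> = B 1 y" using bilin_1_Bsum[OF B] cu by simp
    finally show "Bsum B (\<Delta> y) = B 1 y + Bsum B ys" .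
  qed
  then show ?thesis using deg by blast
qed

definition YS :: "nat \<Rightarrow> 'h \<Rightarrow> ('h \<times> 'h) list" where
  "YS j y = (SOME ys. (\<forall>B. bilin B \<longrightarrow> Bsum B (\<Delta> y) = B 1 y + Bsum B ys) \<and> (\<forall>(a, b)\<in>set ys. \<exists>q<j. b \<in> Hn q))"

lemma YS: "y \<in> Hn j \<Longrightarrow> 0 < j \<Longrightarrow>
   (\<forall>B. bilin B \<longrightarrow> Bsum B (\<Delta> y) = B 1 y + Bsum B (YS j y)) \<and> (\<forall>(a, b)\<in>set (YS j y). \<exists>q<j. b \<in> Hn q)"
  unfolding YS_def by (rule someI_ex[OF YS_ex])

definition Rf :: "('h \<Rightarrow> 'h) \<Rightarrow> nat \<Rightarrow> 'h \<Rightarrow> 'h" where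
  "Rf f j y = Bsum (\<lambda>a b. a * f b) (YS j y)"

lemma Rf_add: assumes f: "lin f" and y: "y \<in> Hn j" and z: "z \<in> Hn j" and j: "0 < j"
  shows "Rf f j (y + z) = Rf f j y + Rf f j z"
proof -
  let ?B = "\<lambda>a b. a * f b"
  have B: "bilin ?B" using bilin_mult[OF f] .
  have yz: "y + z \<in> Hn j" using V.subspace_add[OF subsp y z] .
  have "Bsum ?B (\<Delta> (y + z)) = Bsum ?B (\<Delta> y) + Bsum ?B (\<Delta> z)" by (rule Delta_Bsum_add[OF B])
  moreover note conjunct1[OF YS[OF yz j], rule_format, OF B]
    conjunct1[OF YS[OF y j], rule_format, OF B] conjunct1[OF YS[OF z j], rule_format, OF B]
  ultimately have "1 * f (y + z) + Rf f j (y + z) = 1 * f y + Rf f j y + (1 * f z + Rf f j z)"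
    unfolding Rf_def by simp
  then show ?thesis using f by (simp add: lin_def algebra_simps)
qed

lemma Rf_sc: assumes f: "lin f" and y: "y \<in> Hn j" and j: "0 < j"
  shows "Rf f j (sc c y) = sc c (Rf f j y)"
proof -
  let ?B = "\<lambda>a b. a * f b"
  have B: "bilin ?B" using bilin_mult[OF f] .
  have yz: "sc c y \<in> Hn j" using V.subspace_scale[OF subsp y] .
  have "Bsum ?B (\<Delta> (sc c y)) = sc c (Bsum ?B (\<Delta> y))" by (rule Delta_Bsum_sc[OF B])
  moreover note conjunct1[OF YS[OF yz j], rule_format, OF B]
    conjunct1[OF YS[OF y j], rule_format, OF B]
  ultimately have "1 * f (sc c y) + Rf f j (sc c y) = sc c (1 * f y + Rf f j y)"
    unfolding Rf_def by simp
  then show ?thesis using f by (simp add: lin_def algebra_simps)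
qed

lemma Rf_zero: assumes f: "lin f" and j: "0 < j" shows "Rf f j 0 = 0"
  using Rf_sc[OF f zero_Hn j, of 0] by simp

primrec T :: "nat \<Rightarrow> 'h \<Rightarrow> 'h" where
  "T 0 x = sc (\<epsilon> x) 1"
| "T (Suc n) x = T n x - Rf (T n) (Suc n) (comp x (Suc n))"

lemma lin_T: "lin (T n)"
proof (induct n)
  case 0
  then show ?case by (simp add: lin_def eps_add eps_sc V.scale_left_distrib)
next
  case (Suc n)
  show ?case unfolding lin_def
    using Rf_add[OF Suc comp_in comp_in, of "Suc n"] Rf_sc[OF Suc comp_in, of "Suc n"] Suc
    by (simp add: lin_def comp_add comp_sc algebra_simps V.scale_right_diff_distrib)
qed

lemma T_high: "y \<in> Hn k \<Longrightarrow> n < k \<Longrightarrow> T n y = 0"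
proof (induct n)
  case 0
  then show ?case by (simp add: eps_pos)
next
  case (Suc n)
  then show ?case by (simp add: comp_hom Rf_zero[OF lin_T])
qed

lemma T_stable: assumes z: "\<forall>n>m. comp x n = 0" and mk: "m \<le> k" shows "T k x = T m x"
  using mk
proof (induct k rule: dec_induct)
  case base then show ?case by simp
next
  case (step n)
  then show ?case using z by (simp add: Rf_zero[OF lin_T])
qed

lemma T_hom: "y \<in> Hn j \<Longrightarrow> j \<le> k \<Longrightarrow> T k y = T j y"
  by (rule T_stable) (auto simp: comp_hom)

lemma bound_ex: "\<exists>m. \<forall>n>m. comp x n = 0"
  using comp_prop by (meson less_imp_le)

definition S :: "'h \<Rightarrow> 'h" where
  "S x = T (SOME m. \<forall>n>m. comp x n = 0) x"

lemma S_T: "\<exists>m. \<forall>k\<ge>m. S x = T k x"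
proof -
  let ?m = "SOME m. \<forall>n>m. comp x n = 0"
  have z: "\<forall>n>?m. comp x n = 0" by (rule someI_ex[OF bound_ex])
  have "S x = T k x" if "?m \<le> k" for k
    unfolding S_def by (rule T_stable[OF z that, symmetric])
  then have "\<forall>k\<ge>?m. S x = T k x" by blast
  then show ?thesis by blast
qed

lemma lin_S: "lin S"
proof -
  have "S (x + y) = S x + S y" for x y
  proof -
    obtain m1 where h1: "\<forall>k\<ge>m1. S x = T k x" using S_T by blast
    obtain m2 where h2: "\<forall>k\<ge>m2. S y = T k y" using S_T by blast
    obtain m3 where h3: "\<forall>k\<ge>m3. S (x + y) = T k (x + y)" using S_T by blast
    define K where "K = max m1 (max m2 m3)"
    have "S (x + y) = T K (x + y)" using h3 unfolding K_def by simp
    moreover have "S x = T K x" using h1 unfolding K_def by simp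
    moreover have "S y = T K y" using h2 unfolding K_def by simp
    moreover have "T K (x + y) = T K x + T K y" using lin_T[of K] unfolding lin_def by blast
    ultimately show ?thesis by simp
  qed
  moreover have "S (sc c x) = sc c (S x)" for c x
  proof -
    obtain m1 where h1: "\<forall>k\<ge>m1. S x = T k x" using S_T by blast
    obtain m3 where h3: "\<forall>k\<ge>m3. S (sc c x) = T k (sc c x)" using S_T by blast
    define K where "K = max m1 m3"
    have "S (sc c x) = T K (sc c x)" using h3 unfolding K_def by simp
    moreover have "S x = T K x" using h1 unfolding K_def by simp
    moreover have "T K (sc c x) = sc c (T K x)" using lin_T[of K] unfolding lin_def by blast
    ultimately show ?thesis by simp
  qed
  ultimately show ?thesis by (simp add: lin_def)
qed

lemma S_T_list: "\<exists>M. \<forall>k\<ge>M. \<forall>(a, b)\<in>set xs. S b = T k b"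
proof (induct xs)
  case Nil then show ?case by simp
next
  case (Cons p xs)
  obtain a b where p: "p = (a, b)" by fastforce
  obtain M where M: "\<forall>k\<ge>M. \<forall>(a, b)\<in>set xs. S b = T k b" using Cons by blast
  obtain m where m: "\<forall>k\<ge>m. S b = T k b" using S_T by blast
  have "\<forall>k\<ge>max M m. \<forall>(a', b')\<in>set (p # xs). S b' = T k b'"
  proof (intro allI impI ballI)
    fix k q assume k: "max M m \<le> k" and q: "q \<in> set (p # xs)"
    show "case q of (a', b') \<Rightarrow> S b' = T k b'"
    proof (cases "q = p")
      case True then show ?thesis using m k p by simp
    next
      case False then have "q \<in> set xs" using q by simp
      then show ?thesis using M k by fastforce
    qed
  qed
  then show ?case by blast
qed

lemma conv_hom: assumes y: "y \<in> Hn j" and jk: "j \<le> k"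
  shows "Bsum (\<lambda>a b. a * T k b) (\<Delta> y) = sc (\<epsilon> y) 1"
proof (cases j)
  case 0
  then have y0: "y = sc (\<epsilon> y) 1" using y Hn0_eps by simp
  have B: "bilin (\<lambda>a b. a * T k b)" using bilin_mult[OF lin_T] .
  have "Bsum (\<lambda>a b. a * T k b) (\<Delta> y) = Bsum (\<lambda>a b. a * T k b) (\<Delta> (sc (\<epsilon> y) 1))"
    using y0 by metis
  also have "\<dots> = sc (\<epsilon> y) (T k 1)" using Delta_Bsum_sc[OF B] Delta_Bsum_one[OF B] by simp
  also have "T k 1 = T 0 1" by (rule T_hom[OF one_Hn0]) simp
  finally show ?thesis by (simp add: eps_one)
next
  case (Suc i)
  have j: "0 < j" using Suc by simp
  let ?B = "\<lambda>a b. a * T k b"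
  let ?B' = "\<lambda>a b. a * T i b"
  have B: "bilin ?B" using bilin_mult[OF lin_T] .
  have "Bsum ?B (\<Delta> y) = T k y + Bsum ?B (YS j y)" using YS[OF y j] B by simp
  also have "T k y = T j y" using T_hom[OF y jk] .
  also have "\<dots> = - Rf (T i) j y" using Suc T_high[OF y, of i] comp_hom[OF y] by simp
  also have "Bsum ?B (YS j y) = Bsum ?B' (YS j y)"
  proof (rule Bsum_cong)
    fix a b assume "(a, b) \<in> set (YS j y)"
    then obtain q where q: "q < j" "b \<in> Hn q" using YS[OF y j] by blast
    have "T k b = T q b" by (rule T_hom[OF q(2)]) (use q jk in simp)
    also have "\<dots> = T i b" by (rule T_hom[OF q(2), symmetric]) (use q Suc in simp)
    finally show "a * T k b = a * T i b" by simp
  qed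
  finally show ?thesis using eps_pos[OF y j] by (simp add: Rf_def)
qed

lemma conv_S: "Bsum (\<lambda>a b. a * S b) (\<Delta> x) = sc (\<epsilon> x) 1"
proof -
  obtain M where M: "\<forall>k\<ge>M. \<forall>(a, b)\<in>set (\<Delta> x). S b = T k b" using S_T_list by blast
  obtain N where N: "x = sum (comp x) {..<N}" using comp_prop by blast
  let ?k = "max M N"
  let ?C = "\<lambda>x. Bsum (\<lambda>a b. a * T ?k b) (\<Delta> x)"
  have B: "bilin (\<lambda>a b. a * T ?k b)" using bilin_mult[OF lin_T] .
  have "Bsum (\<lambda>a b. a * S b) (\<Delta> x) = ?C x"
  proof (rule Bsum_cong)
    fix a b assume ab: "(a, b) \<in> set (\<Delta> x)"
    have "\<forall>(a, b)\<in>set (\<Delta> x). S b = T ?k b" using M by simp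
    then show "a * S b = a * T ?k b" using ab by fastforce
  qed
  also have "?C x = ?C (sum (comp x) {..<N})" using N by metis
  also have "\<dots> = (\<Sum>j<N. ?C (comp x j))"
  proof -
    have "additive ?C" by (simp add: additive_def Delta_Bsum_add[OF B])
    then show ?thesis by (rule additive.sum)
  qed
  also have "\<dots> = (\<Sum>j<N. sc (\<epsilon> (comp x j)) 1)"
    by (rule sum.cong) (auto intro!: conv_hom comp_in)
  also have "\<dots> = sc (\<epsilon> x) 1"
    by (subst (2) N) (simp add: eps_sum V.scale_sum_left)
  finally show ?thesis .
qed

lemma main:
  "\<exists>S. Vector_Spaces.linear sc sc S
           \<and> (\<forall>x. convolution \<Delta> id S x = sc (\<epsilon> x) 1)
           \<and> S 1 = 1
           \<and> (\<forall>n x ys. 1 \<le> n \<longrightarrow> x \<in> Hn n \<longrightarrow>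
                 tensor_eq sc (pairs2 (\<Delta> x)) (pairs2 ((1, x) # ys)) \<longrightarrow>
                 S x = - sum_list (map (\<lambda>(a, b). a * S b) ys))"
proof (intro exI[of _ S] conjI allI impI)
  have B: "bilin (\<lambda>a b. a * S b)" using bilin_mult[OF lin_S] .
  show "Vector_Spaces.linear sc sc S"
    by (rule iffD2[OF Vector_Spaces.linear_iff]) (use lin_S V.vector_space_axioms in \<open>simp add: lin_def\<close>)
  show conv: "convolution \<Delta> id S x = sc (\<epsilon> x) 1" for x
    using conv_S[of x] by (simp add: convolution_def Bsum_def)
  show "S 1 = 1" using conv_S[of 1] Delta_Bsum_one[OF B] by (simp add: eps_one)
  fix n x ys assume n: "1 \<le> n" and x: "x \<in> Hn n"
    and t: "tensor_eq sc (pairs2 (\<Delta> x)) (pairs2 ((1, x) # ys))"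
  have "sc (\<epsilon> x) 1 = S x + Bsum (\<lambda>a b. a * S b) ys"
    using conv_S[of x] W2[OF t B] by simp
  moreover have "\<epsilon> x = 0" using eps_pos[OF x] n by simp
  ultimately show "S x = - sum_list (map (\<lambda>(a, b). a * S b) ys)"
    by (simp add: Bsum_def eq_neg_iff_add_eq_0)
qed

end

theorem theorem4p6:
  fixes sc :: "'k::field \<Rightarrow> 'h::comm_ring_1 \<Rightarrow> 'h"
    and \<Delta> :: "'h \<Rightarrow> ('h \<times> 'h) list"
    and \<epsilon> :: "'h \<Rightarrow> 'k"
    and Hn :: "nat \<Rightarrow> 'h set"
  assumes "left_counital_bialgebra sc \<Delta> \<epsilon>"
    and "connected_graded_bialgebra sc \<Delta> \<epsilon> Hn"
  shows "\<exists>S. Vector_Spaces.linear sc sc S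
           \<and> (\<forall>x. convolution \<Delta> id S x = sc (\<epsilon> x) 1)
           \<and> S 1 = 1
           \<and> (\<forall>n x ys. 1 \<le> n \<longrightarrow> x \<in> Hn n \<longrightarrow>
                 tensor_eq sc (pairs2 (\<Delta> x)) (pairs2 ((1, x) # ys)) \<longrightarrow>
                 S x = - sum_list (map (\<lambda>(a, b). a * S b) ys))"
  using cgb.main[OF cgb.intro[OF assms]] .

end
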